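(* Let $\tau=e^{2\pi i/3}$ and define on $\mathbb{C}$ the maps $q_1(t)=-t-1$, $q_\tau(t)=-t-\tau$, $q_{\tau^2}(t)=-t-\tau^2$. Consider the infinite directed graph with vertices $a_{i,j}$ (row $1$: $a_{1,1}$; rows $2,3$: $a_{i,1},a_{i,2}$; for $i\ge4$, $1\le j\le \frac i2+1$ if $i$ even and $1\le j\le\frac{i-1}{2}+1$ if $i$ odd) and labelled edges: $a_{1,1}\to a_{2,1}$ labelled $q_\tau$, $a_{1,1}\to a_{2,2}$ labelled $q_{\tau^2}$; for every $k\ge1$ and $1\le j\le k+1$: $a_{2k,j}\to a_{2k+1,j}$ labelled $q_1$, $a_{2k+1,j}\to a_{2k+2,j}$ labelled $q_\tau$, $a_{2k+1,j}\to a_{2k+2,j+1}$ labelled $q_{\tau^2}$. Assign $t(1,1)=-2$ and, for a vertex $a_{i,j}$, let $t(i,j)$ be the value obtained from $-2$ by applying successively the maps labelling the edges of a directed path from $a_{1,1}$ to $a_{i,j}$. Then \[t(1,1)=-2,\quad t(2,1)=2-\tau,\quad t(3,1)=-3+\tau;\] for all $i\ge2$: \[t(2i,1)=t(2,1)+(i-1)(1-\tau),\qquad t(2i+1,1)=t(3,1)-(i-1)(1-\tau);\] and for all $i\ge2$ and $2\le j\le i+1$: \[t(2i,j)=t(2i,1)+(j-1)(1+2\tau),\qquad t(2i+1,j)=t(2i+1,1)-(j-1)(1+2\tau).\]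
   Context: In the paper, $t(i,j)$ is the parameter of the elliptic pencil (member of Lins Neto's family of foliations $\Omega+t\,\Xi=0$) at entry $a_{i,j}$ of a diagram of bifurcations of quadratic Cremona maps $Q_1,Q_\tau,Q_{\tau^2}$ preserving the dual Hesse arrangement, starting from the pencil with parameter $-2$; the strict transform under $Q_1,Q_\tau,Q_{\tau^2}$ changes the parameter by $q_1,q_\tau,q_{\tau^2}$ respectively, which is the recursion stated above. Note $1+\tau+\tau^2=0$. *)

theory Defs
  imports Complex_Main
begin

definition tau :: complex where
  "tau = exp (2 * pi * \<i> / 3)"

definition q1 :: "complex \<Rightarrow> complex" where "q1 t = - t - 1"
definition qtau :: "complex \<Rightarrow> complex" where "qtau t = - t - tau"
definition qtau2 :: "complex \<Rightarrow> complex" where "qtau2 t = - t - tau^2"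

text \<open>pv i j v: there is a directed path from a(1,1) to a(i,j) in the bifurcation
  diagram such that applying successively the edge labels to -2 gives v.\<close>
inductive pv :: "nat \<Rightarrow> nat \<Rightarrow> complex \<Rightarrow> bool" where
  start: "pv 1 1 (-2)"
| e_tau0: "pv 1 1 v \<Longrightarrow> pv 2 1 (qtau v)"
| e_tau20: "pv 1 1 v \<Longrightarrow> pv 2 2 (qtau2 v)"
| e_one: "\<lbrakk>k \<ge> 1; 1 \<le> j; j \<le> k + 1; pv (2*k) j v\<rbrakk> \<Longrightarrow> pv (2*k+1) j (q1 v)"
| e_tau: "\<lbrakk>k \<ge> 1; 1 \<le> j; j \<le> k + 1; pv (2*k+1) j v\<rbrakk> \<Longrightarrow> pv (2*k+2) j (qtau v)"
| e_tau2: "\<lbrakk>k \<ge> 1; 1 \<le> j; j \<le> k + 1; pv (2*k+1) j v\<rbrakk> \<Longrightarrow> pv (2*k+2) (j+1) (qtau2 v)"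

definition tval :: "nat \<Rightarrow> nat \<Rightarrow> complex" where
  "tval i j = (THE v. pv i j v)"

end

theory Submission
  imports Defs
begin

lemma tau_eq: "tau = Complex (-1/2) (sqrt 3 / 2)"
proof -
  have "tau = cis (2 * pi / 3)"
    unfolding tau_def cis_conv_exp by (simp add: mult.commute)
  also have "\<dots> = Complex (-1/2) (sqrt 3 / 2)"
    by (simp add: cis.ctr cos_120 sin_120)
  finally show ?thesis .
qed

lemma tau_sq: "tau^2 = - 1 - tau"
  unfolding tau_eq
  by (simp add: power2_eq_square complex_eq_iff field_simps)

definition E :: "nat \<Rightarrow> nat \<Rightarrow> complex" where
  "E i j = 2 - tau + (of_nat i - 1) * (1 - tau) + (of_nat j - 1) * (1 + 2 * tau)"

definition F :: "nat \<Rightarrow> nat \<Rightarrow> complex" where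
  "F n j = (if n = 1 then -2 else if even n then E (n div 2) j else - E (n div 2) j - 1)"

lemma pv_F: "pv n j v \<Longrightarrow> v = F n j"
proof (induction rule: pv.induct)
  case start
  then show ?case by (simp add: F_def)
next
  case (e_tau0 v)
  then show ?case by (simp add: F_def E_def qtau_def)
next
  case (e_tau20 v)
  then show ?case by (simp add: F_def E_def qtau2_def tau_sq)
next
  case (e_one k j v)
  then show ?case by (simp add: F_def E_def q1_def)
next
  case (e_tau k j v)
  have a: "(2*k+2) div 2 = Suc k" "(2*k+1) div 2 = k" by simp_all
  from e_tau show ?case
    by (simp add: F_def a qtau_def E_def algebra_simps)
next
  case (e_tau2 k j v)
  have a: "(2*k+2) div 2 = Suc k" "(2*k+1) div 2 = k" by simp_all
  from e_tau2 show ?case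
    by (simp add: F_def a qtau2_def E_def tau_sq algebra_simps)
qed

lemma pv_ex: "i \<ge> 1 \<Longrightarrow> 1 \<le> j \<Longrightarrow> j \<le> i + 1 \<Longrightarrow> pv (2*i) j (F (2*i) j) \<and> pv (2*i+1) j (F (2*i+1) j)"
proof (induction i arbitrary: j rule: nat_induct_at_least)
  case base
  have p2: "pv 2 j (F 2 j)"
  proof (cases "j = 1")
    case True
    have "pv 2 1 (qtau (-2))" by (rule pv.e_tau0[OF pv.start])
    moreover have "qtau (-2) = F 2 1" by (simp add: qtau_def F_def E_def)
    ultimately show ?thesis using True by simp
  next
    case False
    with base have j: "j = 2" by simp
    have "pv 2 2 (qtau2 (-2))" by (rule pv.e_tau20[OF pv.start])
    moreover have "qtau2 (-2) = F 2 2" by (simp add: qtau2_def F_def E_def tau_sq)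
    ultimately show ?thesis using j by simp
  qed
  have "pv (2*1+1) j (q1 (F 2 j))"
    by (rule pv.e_one) (use base p2 in simp_all)
  moreover have "q1 (F 2 j) = F 3 j" by (simp add: q1_def F_def)
  ultimately show ?case using p2 by simp
next
  case (Suc i)
  have a: "(2*i+2) div 2 = Suc i" "(2*i+1) div 2 = i" "(2*i+3) div 2 = Suc i" by simp_all
  have pe: "pv (2*i+2) j (F (2*i+2) j)"
  proof (cases "j \<le> i + 1")
    case True
    have "pv (2*i+1) j (F (2*i+1) j)" using Suc True by simp
    then have "pv (2*i+2) j (qtau (F (2*i+1) j))"
      by (rule pv.e_tau[rotated 3]) (use Suc True in simp_all)
    moreover have "qtau (F (2*i+1) j) = F (2*i+2) j"
      using Suc.hyps by (simp add: F_def a qtau_def E_def algebra_simps)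
    ultimately show ?thesis by simp
  next
    case False
    then have j: "j = (i+1) + 1" using Suc by simp
    have "pv (2*i+1) (i+1) (F (2*i+1) (i+1))" using Suc by simp
    then have "pv (2*i+2) ((i+1)+1) (qtau2 (F (2*i+1) (i+1)))"
      by (rule pv.e_tau2[rotated 3]) (use Suc in simp_all)
    moreover have "qtau2 (F (2*i+1) (i+1)) = F (2*i+2) ((i+1)+1)"
      using Suc.hyps by (simp add: F_def a qtau2_def E_def tau_sq algebra_simps)
    ultimately show ?thesis using j by simp
  qed
  have "pv (2*(i+1)+1) j (q1 (F (2*i+2) j))"
    by (rule pv.e_one) (use Suc pe in simp_all)
  moreover have "q1 (F (2*i+2) j) = F (2*i+3) j"
    by (simp add: q1_def F_def a)
  ultimately show ?case using pe by (simp add: numeral_3_eq_3 algebra_simps)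
qed

lemma tval_F: "pv n j (F n j) \<Longrightarrow> tval n j = F n j"
  unfolding tval_def by (rule the_equality) (auto dest: pv_F)

lemma tv11: "tval 1 1 = -2"
proof -
  have "F 1 1 = -2" by (simp add: F_def)
  then show ?thesis using tval_F[of 1 1] pv.start by simp
qed

lemma tvE: "i \<ge> 1 \<Longrightarrow> 1 \<le> j \<Longrightarrow> j \<le> i + 1 \<Longrightarrow> tval (2*i) j = E i j"
  using tval_F pv_ex by (simp add: F_def)

lemma tvO: "i \<ge> 1 \<Longrightarrow> 1 \<le> j \<Longrightarrow> j \<le> i + 1 \<Longrightarrow> tval (2*i+1) j = - E i j - 1"
  using tval_F pv_ex by (simp add: F_def)

theorem mainTheorem2:
  shows "tval 1 1 = -2 \<and> tval 2 1 = 2 - tau \<and> tval 3 1 = -3 + tau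
    \<and> (\<forall>i::nat. i \<ge> 2 \<longrightarrow>
          tval (2*i) 1 = tval 2 1 + of_nat (i - 1) * (1 - tau)
        \<and> tval (2*i+1) 1 = tval 3 1 - of_nat (i - 1) * (1 - tau))
    \<and> (\<forall>i j::nat. i \<ge> 2 \<longrightarrow> 2 \<le> j \<longrightarrow> j \<le> i + 1 \<longrightarrow>
          tval (2*i) j = tval (2*i) 1 + of_nat (j - 1) * (1 + 2 * tau)
        \<and> tval (2*i+1) j = tval (2*i+1) 1 - of_nat (j - 1) * (1 + 2 * tau))"
proof -
  have t2: "tval 2 1 = 2 - tau" using tvE[of 1 1] by (simp add: E_def)
  have t3: "tval 3 1 = -3 + tau" using tvO[of 1 1] by (simp add: E_def)
  have A: "\<forall>i::nat. i \<ge> 2 \<longrightarrow>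
          tval (2*i) 1 = tval 2 1 + of_nat (i - 1) * (1 - tau)
        \<and> tval (2*i+1) 1 = tval 3 1 - of_nat (i - 1) * (1 - tau)"
  proof (intro allI impI)
    fix i :: nat assume i: "i \<ge> 2"
    show "tval (2*i) 1 = tval 2 1 + of_nat (i - 1) * (1 - tau)
        \<and> tval (2*i+1) 1 = tval 3 1 - of_nat (i - 1) * (1 - tau)"
      unfolding t2 t3 using tvE[of i 1] tvO[of i 1] i by (simp add: E_def of_nat_diff algebra_simps)
  qed
  have B: "\<forall>i j::nat. i \<ge> 2 \<longrightarrow> 2 \<le> j \<longrightarrow> j \<le> i + 1 \<longrightarrow>
          tval (2*i) j = tval (2*i) 1 + of_nat (j - 1) * (1 + 2 * tau)
        \<and> tval (2*i+1) j = tval (2*i+1) 1 - of_nat (j - 1) * (1 + 2 * tau)"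
  proof (intro allI impI)
    fix i j :: nat assume i: "i \<ge> 2" "2 \<le> j" "j \<le> i + 1"
    show "tval (2*i) j = tval (2*i) 1 + of_nat (j - 1) * (1 + 2 * tau)
        \<and> tval (2*i+1) j = tval (2*i+1) 1 - of_nat (j - 1) * (1 + 2 * tau)"
    proof -
      have e: "tval (2*i) 1 = E i 1" "tval (2*i+1) 1 = - E i 1 - 1"
              "tval (2*i) j = E i j" "tval (2*i+1) j = - E i j - 1"
        using i tvE tvO by auto
      show ?thesis unfolding e using i by (simp add: E_def of_nat_diff algebra_simps)
    qed
  qed
  show ?thesis using tv11 t2 t3 A B by blast
qed

end
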